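(* Suppose Assumptions 1–4 hold. Let $\mathbf{x}$ be a Cournot candidate and $\mathbf{x}^S$ a social optimum, with $X=\sum_n x_n$ and $X^S=\sum_n x^S_n$. If $p(X)\neq p(X^S)$, then $p(X)>p(X^S)$ and $X<X^S$.
   Context: Cournot model: $N$ suppliers, inverse demand $p:[0,\infty)\to[0,\infty)$, supplier $n$ has cost $C_n:[0,\infty)\to[0,\infty)$ and chooses $x_n\ge0$; $X=\sum_n x_n$. $\partial_\pm$ denote right/left derivatives; $C_n'(0)$ is the right derivative at $0$. Assumption 1: each $C_n$ is convex, continuous, nondecreasing on $[0,\infty)$, continuously differentiable on $(0,\infty)$, with $C_n(0)=0$. Assumption 2: $p$ is continuous, nonnegative, nonincreasing, $p(0)>0$; its right derivative at $0$ exists and at every $q>0$ its left and right derivatives exist. Assumption 3: there exists $R>0$ such that $p(R)\le\min_n C_n'(0)$. Assumption 4: $p(0)>\min_n C_n'(0)$. A social optimum is a nonnegative vector maximizing $\int_0^X p(q)\,dq-\sum_n C_n(x_n)$. A nonnegative vector $\mathbf{x}$ is a Cournot candidate if for every $n$: $C_n'(x_n)\le p(X)+x_n\,\partial_-p(X)$ whenever $x_n>0$, and $C_n'(x_n)\ge p(X)+x_n\,\partial_+p(X)$. *)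

theory Defs
  imports "HOL-Analysis.Analysis"
begin

(* Suppliers are indexed by {..<N}; a production vector is x :: nat => real,
   only its entries on {..<N} matter. *)

definition total :: "nat \<Rightarrow> (nat \<Rightarrow> real) \<Rightarrow> real" where
  "total N x = (\<Sum>n<N. x n)"

definition nonneg_vec :: "nat \<Rightarrow> (nat \<Rightarrow> real) \<Rightarrow> bool" where
  "nonneg_vec N x \<longleftrightarrow> (\<forall>n<N. x n \<ge> 0)"

definition welfare :: "nat \<Rightarrow> (real \<Rightarrow> real) \<Rightarrow> (nat \<Rightarrow> real \<Rightarrow> real) \<Rightarrow> (nat \<Rightarrow> real) \<Rightarrow> real" where
  "welfare N p C x = integral {0..total N x} p - (\<Sum>n<N. C n (x n))"

definition social_optimum :: "nat \<Rightarrow> (real \<Rightarrow> real) \<Rightarrow> (nat \<Rightarrow> real \<Rightarrow> real) \<Rightarrow> (nat \<Rightarrow> real) \<Rightarrow> bool" where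
  "social_optimum N p C x \<longleftrightarrow> nonneg_vec N x \<and>
     (\<forall>y. nonneg_vec N y \<longrightarrow> welfare N p C y \<le> welfare N p C x)"

(* dC n t = C_n'(t) (right derivative at 0); dpL/dpR = left/right derivatives of p *)
definition cournot_candidate :: "nat \<Rightarrow> (real \<Rightarrow> real) \<Rightarrow> (real \<Rightarrow> real) \<Rightarrow> (real \<Rightarrow> real)
     \<Rightarrow> (nat \<Rightarrow> real \<Rightarrow> real) \<Rightarrow> (nat \<Rightarrow> real) \<Rightarrow> bool" where
  "cournot_candidate N p dpL dpR dC x \<longleftrightarrow> nonneg_vec N x \<and>
     (\<forall>n<N. (x n > 0 \<longrightarrow> dC n (x n) \<le> p (total N x) + x n * dpL (total N x)) \<and>
            dC n (x n) \<ge> p (total N x) + x n * dpR (total N x))"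

end

theory Submission imports Defs begin

lemma dpL_nonpos:
  fixes p :: "real \<Rightarrow> real"
  assumes anti: "\<And>a b. 0 \<le> a \<Longrightarrow> a \<le> b \<Longrightarrow> p b \<le> p a"
    and q: "q > 0" and d: "(p has_real_derivative l) (at q within {..q})"
  shows "l \<le> 0"
proof (rule ccontr)
  assume "\<not> l \<le> 0"
  then have "0 < l" by simp
  from has_real_derivative_pos_inc_left[OF d this] obtain e where
    e: "e > 0" "\<And>h. h > 0 \<Longrightarrow> q - h \<in> {..q} \<Longrightarrow> h < e \<Longrightarrow> p (q - h) < p q" by blast
  define h where "h = min e q / 2"
  have h: "h > 0" "h < e" "h < q" using e q by (auto simp: h_def)
  have "p (q - h) < p q" using e(2)[of h] h by auto
  moreover have "p q \<le> p (q - h)" using anti[of "q - h" q] h by auto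
  ultimately show False by simp
qed

lemma convex_deriv_mono:
  fixes f :: "real \<Rightarrow> real"
  assumes cv: "convex_on {0..} f" and ab: "0 \<le> a" "a < b"
    and da: "(f has_real_derivative fa) (at a within {0..})"
    and db: "(f has_real_derivative fb) (at b within {0..})"
  shows "fa \<le> fb"
proof -
  define s where "s = (f b - f a) / (b - a)"
  have "f a - f b \<ge> fb * (a - b)"
    by (rule convex_on_imp_above_tangent[OF cv _ _ _ db]) (use ab in auto)
  then have "f b - f a \<le> fb * (b - a)" by (simp add: algebra_simps)
  then have s_le: "s \<le> fb" using ab by (simp add: s_def divide_simps)
  have "fa \<le> s"
  proof (rule ccontr)
    assume "\<not> fa \<le> s"
    then have "0 < fa - s" by simp
    have dd: "((\<lambda>y. f y - s * y) has_real_derivative fa - s) (at a within {0..})"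
      by (auto intro!: derivative_eq_intros da)
    from has_real_derivative_pos_inc_right[OF dd \<open>0 < fa - s\<close>] obtain e where
      e: "e > 0" "\<And>h. h > 0 \<Longrightarrow> a + h \<in> {0..} \<Longrightarrow> h < e \<Longrightarrow> f a - s * a < f (a + h) - s * (a + h)"
      by blast
    define h where "h = min e (b - a) / 2"
    have h: "h > 0" "h < e" "h < b - a" using e ab by (auto simp: h_def)
    have lt: "f a - s * a < f (a + h) - s * (a + h)" using e(2)[of h] h ab by auto
    have "convex_on {a..b} f" by (rule convex_on_subset[OF cv]) (use ab in auto)
    from convex_onD_Icc'[OF this, of "a + h"] h
    have "f (a + h) \<le> s * h + f a" by (simp add: s_def)
    with lt show False by (simp add: algebra_simps)
  qed
  with s_le show ?thesis by simp
qed

lemma image_shift: "(\<lambda>t. c + t) ` {0..1} = {c..c+(1::real)}"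
proof
  show "(\<lambda>t. c + t) ` {0..1} \<subseteq> {c..c+1}" by auto
  show "{c..c+1} \<subseteq> (\<lambda>t. c + t) ` {0..1}"
  proof
    fix x assume "x \<in> {c..c+1}"
    then show "x \<in> (\<lambda>t. c + t) ` {0..1}" by (intro image_eqI[of _ _ "x - c"]) auto
  qed
qed

lemma opt_cond:
  fixes p :: "real \<Rightarrow> real"
  assumes n: "n < N" and opt: "social_optimum N p C xS"
    and p_cont: "continuous_on {0..} p"
    and Cd: "(C n has_real_derivative d) (at (xS n) within {0..})"
  shows "p (total N xS) \<le> d"
proof (rule ccontr)
  assume "\<not> p (total N xS) \<le> d"
  then have pos: "0 < p (total N xS) - d" by simp
  define XS where "XS = total N xS"
  define a where "a = xS n"
  have nn: "nonneg_vec N xS" and best: "\<And>y. nonneg_vec N y \<Longrightarrow> welfare N p C y \<le> welfare N p C xS"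
    using opt by (auto simp: social_optimum_def)
  have XS0: "XS \<ge> 0" using nn by (auto simp: XS_def total_def nonneg_vec_def intro!: sum_nonneg)
  have a0: "a \<ge> 0" using nn n by (auto simp: a_def nonneg_vec_def)
  define g where "g t = integral {0..XS+t} p - C n (a + t)" for t
  have fin: "finite {..<N}" and nin: "n \<in> {..<N}" using n by auto
  have wel: "welfare N p C (xS(n := a + t)) - welfare N p C xS = g t - g 0" for t
  proof -
    have "total N (xS(n := a + t)) = (a + t) + (\<Sum>k\<in>{..<N}-{n}. xS k)"
      unfolding total_def by (subst sum.remove[OF fin nin]) (auto intro!: sum.cong)
    moreover have "XS = a + (\<Sum>k\<in>{..<N}-{n}. xS k)"
      unfolding XS_def total_def a_def by (subst sum.remove[OF fin nin]) auto
    ultimately have T: "total N (xS(n := a + t)) = XS + t" by simp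
    have "(\<Sum>k<N. C k ((xS(n := a + t)) k)) = C n (a + t) + (\<Sum>k\<in>{..<N}-{n}. C k (xS k))"
      by (subst sum.remove[OF fin nin]) (auto intro!: sum.cong)
    moreover have "(\<Sum>k<N. C k (xS k)) = C n a + (\<Sum>k\<in>{..<N}-{n}. C k (xS k))"
      unfolding a_def by (subst sum.remove[OF fin nin]) auto
    ultimately show ?thesis unfolding welfare_def g_def T XS_def[symmetric] by simp
  qed
  have F: "((\<lambda>s. integral {0..s} p) has_real_derivative p XS) (at XS within {0..XS+1})"
    by (rule integral_has_real_derivative) (use XS0 in \<open>auto intro: continuous_on_subset[OF p_cont]\<close>)
  have F2: "((\<lambda>s. integral {0..s} p) has_real_derivative p XS) (at ((\<lambda>t. XS + t) 0) within ((\<lambda>t. XS + t) ` {0..1}))"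
    unfolding image_shift add_0_right by (rule has_field_derivative_subset[OF F]) (use XS0 in auto)
  have G1: "((\<lambda>t. integral {0..XS+t} p) has_real_derivative p XS * 1) (at 0 within {0..1})"
    proof -
    have D1: "((\<lambda>t. XS + t) has_real_derivative 1) (at 0 within {0..1})" by (auto intro!: derivative_eq_intros)
    show ?thesis using DERIV_image_chain[OF F2 D1] by (simp add: o_def)
  qed
  have Cd2: "(C n has_real_derivative d) (at ((\<lambda>t. a + t) 0) within ((\<lambda>t. a + t) ` {0..1}))"
    unfolding image_shift add_0_right by (rule has_field_derivative_subset[OF Cd[folded a_def]]) (use a0 in auto)
  have G2: "((\<lambda>t. C n (a + t)) has_real_derivative d * 1) (at 0 within {0..1})"
    proof -
    have D1: "((\<lambda>t. a + t) has_real_derivative 1) (at 0 within {0..1})" by (auto intro!: derivative_eq_intros)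
    show ?thesis using DERIV_image_chain[OF Cd2 D1] by (simp add: o_def)
  qed
  have G: "(g has_real_derivative p XS - d) (at 0 within {0..1})"
    unfolding g_def using DERIV_diff[OF G1 G2] by simp
  from has_real_derivative_pos_inc_right[OF G pos[folded XS_def]] obtain e where
    e: "e > 0" "\<And>h. h > 0 \<Longrightarrow> 0 + h \<in> {0..1} \<Longrightarrow> h < e \<Longrightarrow> g 0 < g (0 + h)" by blast
  define h where "h = min e 1 / 2"
  have h: "h > 0" "h < e" "h \<le> 1" using e by (auto simp: h_def)
  have "g 0 < g h" using e(2)[of h] h by auto
  moreover have "nonneg_vec N (xS(n := a + h))" using nn a0 h by (auto simp: nonneg_vec_def)
  then have "welfare N p C (xS(n := a + h)) \<le> welfare N p C xS" by (rule best)
  ultimately show False using wel[of h] by simp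
qed



theorem proposition7:
  fixes N :: nat
    and p :: "real \<Rightarrow> real" and dpL dpR :: "real \<Rightarrow> real"
    and C :: "nat \<Rightarrow> real \<Rightarrow> real" and dC :: "nat \<Rightarrow> real \<Rightarrow> real"
    and x xS :: "nat \<Rightarrow> real"
  assumes N_pos: "N \<ge> 1"
    (* Assumption 1 *)
    and C_convex: "\<And>n. n < N \<Longrightarrow> convex_on {0..} (C n)"
    and C_cont: "\<And>n. n < N \<Longrightarrow> continuous_on {0..} (C n)"
    and C_mono: "\<And>n. n < N \<Longrightarrow> mono_on {0..} (C n)"
    and C_deriv: "\<And>n t. n < N \<Longrightarrow> t \<ge> 0 \<Longrightarrow> (C n has_real_derivative dC n t) (at t within {0..})"
    and C_C1: "\<And>n. n < N \<Longrightarrow> continuous_on {0<..} (dC n)"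
    and C_zero: "\<And>n. n < N \<Longrightarrow> C n 0 = 0"
    (* Assumption 2 *)
    and p_cont: "continuous_on {0..} p"
    and p_nonneg: "\<And>q. q \<ge> 0 \<Longrightarrow> p q \<ge> 0"
    and p_antimono: "\<And>a b. 0 \<le> a \<Longrightarrow> a \<le> b \<Longrightarrow> p b \<le> p a"
    and p0_pos: "p 0 > 0"
    and p_right_deriv: "\<And>q. q \<ge> 0 \<Longrightarrow> (p has_real_derivative dpR q) (at q within {q..})"
    and p_left_deriv: "\<And>q. q > 0 \<Longrightarrow> (p has_real_derivative dpL q) (at q within {..q})"
    (* Assumption 3 *)
    and A3: "\<exists>R>0. p R \<le> (MIN n\<in>{..<N}. dC n 0)"
    (* Assumption 4 *)
    and A4: "p 0 > (MIN n\<in>{..<N}. dC n 0)"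
    and cand: "cournot_candidate N p dpL dpR dC x"
    and opt: "social_optimum N p C xS"
    and neq: "p (total N x) \<noteq> p (total N xS)"
  shows "p (total N x) > p (total N xS) \<and> total N x < total N xS"
  proof -
  define X where "X = total N x"
  define XS where "XS = total N xS"
  have nnx: "nonneg_vec N x" using cand by (simp add: cournot_candidate_def)
  have nnS: "nonneg_vec N xS" using opt by (simp add: social_optimum_def)
  have X0: "X \<ge> 0" using nnx by (auto simp: X_def total_def nonneg_vec_def intro!: sum_nonneg)
  have XS0: "XS \<ge> 0" using nnS by (auto simp: XS_def total_def nonneg_vec_def intro!: sum_nonneg)
  have key: "\<not> p X < p XS"
  proof
    assume lt: "p X < p XS"
    have "XS < X"
    proof (rule ccontr)
      assume "\<not> XS < X"
      then have "p XS \<le> p X" using p_antimono[of X XS] X0 by simp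
      with lt show False by simp
    qed
    obtain n where n: "n < N" "xS n < x n"
    proof (rule ccontr)
      assume "\<not> thesis"
      with that have "\<forall>n<N. x n \<le> xS n" by (meson not_le)
      then have "X \<le> XS" unfolding X_def XS_def total_def by (intro sum_mono) auto
      with \<open>XS < X\<close> show False by simp
    qed
    have a0: "xS n \<ge> 0" using nnS n by (simp add: nonneg_vec_def)
    have xpos: "x n > 0" using a0 n by simp
    have "x n \<le> X" unfolding X_def total_def
      by (rule member_le_sum) (use n nnx in \<open>auto simp: nonneg_vec_def\<close>)
    then have Xpos: "X > 0" using xpos by simp
    have c1: "dC n (x n) \<le> p X + x n * dpL X"
      using cand n xpos by (simp add: cournot_candidate_def X_def)
    have "dpL X \<le> 0" by (rule dpL_nonpos[OF p_antimono Xpos p_left_deriv[OF Xpos]]) auto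
    then have "x n * dpL X \<le> 0" using xpos by (simp add: mult_nonneg_nonpos)
    with c1 have c2: "dC n (x n) \<le> p X" by simp
    have o1: "p XS \<le> dC n (xS n)" unfolding XS_def
      by (rule opt_cond[OF n(1) opt p_cont C_deriv[OF n(1) a0]])
    have "dC n (xS n) \<le> dC n (x n)"
      by (rule convex_deriv_mono[OF C_convex[OF n(1)] a0 n(2) C_deriv[OF n(1) a0] C_deriv[OF n(1)]]) (use xpos in simp)
    with c2 o1 lt show False by simp
  qed
  have gt: "p X > p XS" using key neq by (simp add: X_def XS_def)
  have "X < XS"
  proof (rule ccontr)
    assume "\<not> X < XS"
    then have "p X \<le> p XS" using p_antimono[of XS X] XS0 by simp
    with gt show False by simp
  qed
  with gt show ?thesis by (simp add: X_def XS_def)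
qed

end
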